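(* Let $G_{\mathit{di}}$ be a knowledge connectivity graph whose sink component (vertex set $V_{\mathit{sink}}$) contains at least $2f+1$ correct processes. If the slices of the processes are defined by the slice construction below, then every correct process $i\in W$ has at least one quorum $Q$ composed entirely of correct processes, i.e. $i\in Q\subseteq W$.
   Context: Processes and faults: $\Pi$ is a finite set of processes, $f\ge0$ a known integer; $W\subseteq\Pi$ is the set of correct processes and $F=\Pi\setminus W$ the Byzantine faulty processes, $|F|\le f$. Faulty processes may declare arbitrary slices. Slices and quorums: each process $i$ has a set $\mathcal{S}_i$ of slices (subsets of $\Pi$). $Q\subseteq\Pi$ is a quorum if every $i\in Q$ has some $S\in\mathcal{S}_i$ with $S\subseteq Q$; a quorum of $i$ is a quorum containing $i$. Knowledge graph: each process $i$ is given $\mathit{PD}_i\subseteq\Pi$; the knowledge connectivity graph $G_{\mathit{di}}$ is the directed graph on $\Pi$ with edge $(i,j)$ iff $j\in\mathit{PD}_i$. A sink component is a strongly connected component of $G_{\mathit{di}}$ from which no path leads outside it; $G_{\mathit{di}}$ is assumed to have a unique sink component, with vertex set $V_{\mathit{sink}}$. Slice construction: let $m=\lceil (|V_{\mathit{sink}}|+f+1)/2\rceil$. Every correct $i\in V_{\mathit{sink}}$ has $\mathcal{S}_i=\{S\subseteq V_{\mathit{sink}}: |S|=m\}$. Every correct $i\notin V_{\mathit{sink}}$ is given (by a sink detector) a set $V_i\subseteq V_{\mathit{sink}}$ containing at least $f+1$ correct members of $V_{\mathit{sink}}$, and has $\mathcal{S}_i=\{S\subseteq V_i: |S|=f+1\}$.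 *)

theory Defs
  imports Complex_Main
begin

definition is_quorum :: "('p \<Rightarrow> 'p set set) \<Rightarrow> 'p set \<Rightarrow> bool" where
  "is_quorum Sl Q \<longleftrightarrow> (\<forall>i\<in>Q. \<exists>S\<in>Sl i. S \<subseteq> Q)"

definition kc_edges :: "'p set \<Rightarrow> ('p \<Rightarrow> 'p set) \<Rightarrow> ('p \<times> 'p) set" where
  "kc_edges P PD = {(i, j). i \<in> P \<and> j \<in> P \<and> j \<in> PD i}"

definition is_scc :: "'p set \<Rightarrow> ('p \<Rightarrow> 'p set) \<Rightarrow> 'p set \<Rightarrow> bool" where
  "is_scc P PD C \<longleftrightarrow> C \<noteq> {} \<and> C \<subseteq> P \<and>
     (\<forall>x\<in>C. \<forall>y\<in>C. (x, y) \<in> (kc_edges P PD)\<^sup>*) \<and>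
     (\<forall>x\<in>C. \<forall>y\<in>P. (x, y) \<in> (kc_edges P PD)\<^sup>* \<and> (y, x) \<in> (kc_edges P PD)\<^sup>* \<longrightarrow> y \<in> C)"

definition is_sink_component :: "'p set \<Rightarrow> ('p \<Rightarrow> 'p set) \<Rightarrow> 'p set \<Rightarrow> bool" where
  "is_sink_component P PD C \<longleftrightarrow> is_scc P PD C \<and>
     (\<forall>x\<in>C. \<forall>y. (x, y) \<in> (kc_edges P PD)\<^sup>* \<longrightarrow> y \<in> C)"

end

theory Submission
  imports Defs
begin

lemma scc_sub: "is_scc P PD C \<Longrightarrow> C \<subseteq> P"
  unfolding is_scc_def by (rule conjunct1[OF conjunct2])

theorem theorem4:
  fixes P W :: "'p set" and f :: nat
    and PD :: "'p \<Rightarrow> 'p set" and Sl :: "'p \<Rightarrow> 'p set set"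
    and Vsink :: "'p set" and V :: "'p \<Rightarrow> 'p set"
  assumes finP: "finite P"
    and WP: "W \<subseteq> P"
    and faulty: "card (P - W) \<le> f"
    and PD_sub: "\<forall>i\<in>P. PD i \<subseteq> P"
    and sink: "is_sink_component P PD Vsink"
    and sink_unique: "\<forall>C. is_sink_component P PD C \<longrightarrow> C = Vsink"
    and sink_correct: "card (Vsink \<inter> W) \<ge> 2 * f + 1"
    and slices_sink: "\<forall>i\<in>W \<inter> Vsink. Sl i =
        {S. S \<subseteq> Vsink \<and> card S = nat \<lceil>(real (card Vsink) + real f + 1) / 2\<rceil>}"
    and V_sub: "\<forall>i\<in>W - Vsink. V i \<subseteq> Vsink \<and> card (V i \<inter> W) \<ge> f + 1"
    and slices_out: "\<forall>i\<in>W - Vsink. Sl i = {S. S \<subseteq> V i \<and> card S = f + 1}"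
  shows "\<forall>i\<in>W. \<exists>Q. is_quorum Sl Q \<and> i \<in> Q \<and> Q \<subseteq> W"
proof -
  define C where "C = Vsink \<inter> W"
  define m where "m = nat \<lceil>(real (card Vsink) + real f + 1) / 2\<rceil>"
  have scc: "is_scc P PD Vsink" using sink unfolding is_sink_component_def by (rule conjunct1)
  have VP: "Vsink \<subseteq> P" using scc by (rule scc_sub)
  have finV: "finite Vsink" using VP finP finite_subset by blast
  have finC: "finite C" using finV C_def by simp
  have "Vsink - W \<subseteq> P - W" using VP by blast
  hence k: "card (Vsink - W) \<le> f" using faulty finP
    by (meson card_mono finite_Diff le_trans)
  have "card Vsink = card C + card (Vsink - W)"
    unfolding C_def using finV
    by (metis card_Int_Diff)
  hence nle: "card Vsink \<le> card C + f" using k by linarith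
  have cC: "card C \<ge> 2 * f + 1" using sink_correct C_def by simp
  have "(real (card Vsink) + real f + 1) / 2 \<le> real (card C)"
  proof -
    have "real (card Vsink) \<le> real (card C) + real f" using nle by linarith
    moreover have "2 * real f + 1 \<le> real (card C)" using cC by linarith
    ultimately have "real (card Vsink) + real f + 1 \<le> 2 * real (card C)" by linarith
    thus ?thesis by (simp add: field_simps)
  qed
  hence "\<lceil>(real (card Vsink) + real f + 1) / 2\<rceil> \<le> int (card C)"
    by (metis ceiling_le of_int_of_nat_eq)
  hence mle: "m \<le> card C" unfolding m_def by linarith
  then obtain T where T: "T \<subseteq> C" "card T = m" by (meson obtain_subset_with_card_n)
  have sliceC: "\<exists>S\<in>Sl i. S \<subseteq> C" if "i \<in> C" for i
  proof -
    have "Sl i = {S. S \<subseteq> Vsink \<and> card S = m}" using slices_sink that C_def m_def by auto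
    thus ?thesis using T C_def by auto
  qed
  show ?thesis
  proof
    fix i assume iW: "i \<in> W"
    show "\<exists>Q. is_quorum Sl Q \<and> i \<in> Q \<and> Q \<subseteq> W"
    proof (cases "i \<in> Vsink")
      case True
      hence "i \<in> C" using iW C_def by simp
      moreover have "is_quorum Sl C" unfolding is_quorum_def using sliceC by blast
      ultimately show ?thesis using C_def by blast
    next
      case False
      hence iWV: "i \<in> W - Vsink" using iW by simp
      hence Vi: "V i \<subseteq> Vsink" "card (V i \<inter> W) \<ge> f + 1" using V_sub by auto
      then obtain S where S: "S \<subseteq> V i \<inter> W" "card S = f + 1" by (meson obtain_subset_with_card_n)
      have "S \<in> Sl i" using slices_out iWV S by auto
      moreover have "S \<subseteq> C" using S Vi C_def by auto
      ultimately have si: "\<exists>S\<in>Sl i. S \<subseteq> insert i C" by blast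
      have "is_quorum Sl (insert i C)" unfolding is_quorum_def
      proof
        fix j assume j: "j \<in> insert i C"
        show "\<exists>S\<in>Sl j. S \<subseteq> insert i C"
        proof (cases "j = i")
          case True
          then show ?thesis using si by simp
        next
          case False
          hence "j \<in> C" using j by simp
          then obtain S where "S \<in> Sl j" "S \<subseteq> C" using sliceC by blast
          thus ?thesis by blast
        qed
      qed
      thus ?thesis using iW C_def by blast
    qed
  qed
qed

end
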